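(* Let $c\ge1$, $\lambda_1,\lambda_2,\mu_1,\mu_2>0$, let $X$ be the Markov chain described in the context, fix $\alpha$ with $\mathrm{Re}\,\alpha>0$, and let $G(\alpha)=G_{c,c-1}(\alpha)$. Then $$G(\alpha)=\bigl(\alpha I-A_0-W_0(\alpha)\bigr)^{-1}\Bigl(A_{-1}+A_1G(\alpha)^2+\sum_{l=1}^{\infty}W_l(\alpha)G(\alpha)^{l+1}\Bigr).$$
   Context: The Markov chain $X$ on $\mathbb{N}_0^2$ has only nonzero off-diagonal rates $q((i,j),(i+1,j))=\lambda_1$, $q((i,j),(i,j+1))=\lambda_2$ ($i,j\ge0$), $q((i,j),(i-1,j))=\max(\min(i,c-j),0)\mu_1$ ($i\ge1$), $q((i,j),(i,j-1))=\min(c,j)\mu_2$ ($j\ge1$). For $A\subset\mathbb{N}_0^2$, $\tau_A=\inf\{t>0:X(t^-)\ne X(t)\in A\}$; $E_z$ is expectation given $X(0)=z$. $L_i=\{(i,0),\dots,(i,c-1)\}$. Matrices are $c\times c$ with indices $0,\dots,c-1$. $(G_{c,c-1}(\alpha))_{k,l}=E_{(c,k)}[e^{-\alpha\tau_{L_{c-1}}}\mathbf{1}\{X(\tau_{L_{c-1}})=(c-1,l)\}]$. $A_1=\lambda_1I$; $A_{-1}=\mathrm{diag}((c-j)\mu_1)_{j=0}^{c-1}$; $A_0$ is tridiagonal with $(A_0)_{j,j+1}=\lambda_2$ ($0\le j\le c-2$), $(A_0)_{j,j-1}=j\mu_2$ ($1\le j\le c-1$), $(A_0)_{j,j}=-(\lambda_2+j\mu_2+\lambda_1+(c-j)\mu_1)$.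 For $\lambda,\mu,\theta>0$, $w^{\lambda,\mu,\theta}_m(\alpha)=E[e^{-\alpha B}\mathbf{1}\{\Lambda_\theta(B)=m\}]$, $B$ the busy period of an $M/M/1$ queue (arrival rate $\lambda$, service rate $\mu$) started with one customer, $\Lambda_\theta$ an independent rate-$\theta$ Poisson process. $W_m(\alpha)$ has only nonzero entry $(W_m(\alpha))_{c-1,c-1}=\lambda_2w^{\lambda_2,c\mu_2,\lambda_1}_m(\alpha)$. *)

theory Defs
  imports "HOL-Analysis.Infinite_Sum" "Jordan_Normal_Form.Matrix"
begin

text \<open>A CTMC on a countable state type is given by its off-diagonal rates q z z'
 (the diagonal value q z z is ignored). The total exit rate of z:\<close>
definition out_rate :: "('a \<Rightarrow> 'a \<Rightarrow> real) \<Rightarrow> 'a \<Rightarrow> real" where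
  "out_rate q z = (\<Sum>\<^sub>\<infinity> z'\<in>UNIV - {z}. q z z')"

text \<open>Weight of the jump sequence z -> z1 -> ... -> zn (list [z1,...,zn]):
 product of the jump probabilities q(z_k,z_{k+1})/q(z_k) times the Laplace transforms
 q(z_k)/(q(z_k)+alpha) of the exponential holding times.\<close>
fun path_weight :: "('a \<Rightarrow> 'a \<Rightarrow> real) \<Rightarrow> complex \<Rightarrow> 'a \<Rightarrow> 'a list \<Rightarrow> complex" where
  "path_weight q \<alpha> z [] = 1"
| "path_weight q \<alpha> z (z' # p) =
     (if z' = z then 0 else complex_of_real (q z z') / (complex_of_real (out_rate q z) + \<alpha>))
     * path_weight q \<alpha> z' p"

text \<open>hit_LT q alpha A z y = E_z[exp(-alpha tau_A) 1{X(tau_A) = y}], where tau_A is the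
 first time t>0 at which the chain jumps into A; written as the sum over all jump
 sequences that enter A for the first time (after time 0) at y.\<close>
definition hit_LT :: "('a \<Rightarrow> 'a \<Rightarrow> real) \<Rightarrow> complex \<Rightarrow> 'a set \<Rightarrow> 'a \<Rightarrow> 'a \<Rightarrow> complex" where
  "hit_LT q \<alpha> A z y =
     (\<Sum>\<^sub>\<infinity> p\<in>{p. p \<noteq> [] \<and> last p = y \<and> y \<in> A \<and> set (butlast p) \<inter> A = {}}.
        path_weight q \<alpha> z p)"

definition Xrate :: "nat \<Rightarrow> real \<Rightarrow> real \<Rightarrow> real \<Rightarrow> real \<Rightarrow> nat \<times> nat \<Rightarrow> nat \<times> nat \<Rightarrow> real" where
  "Xrate c la1 la2 mu1 mu2 z z' =
     (let i = fst z; j = snd z in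
      if z' = (i + 1, j) then la1
      else if z' = (i, j + 1) then la2
      else if i \<ge> 1 \<and> z' = (i - 1, j) then max (min (real i) (real c - real j)) 0 * mu1
      else if j \<ge> 1 \<and> z' = (i, j - 1) then min (real c) (real j) * mu2
      else 0)"

definition level :: "nat \<Rightarrow> nat \<Rightarrow> (nat \<times> nat) set" where
  "level c i = {(i, j) | j. j < c}"

definition Gmat :: "nat \<Rightarrow> real \<Rightarrow> real \<Rightarrow> real \<Rightarrow> real \<Rightarrow> complex \<Rightarrow> complex mat" where
  "Gmat c la1 la2 mu1 mu2 \<alpha> =
     mat c c (\<lambda>(k, l). hit_LT (Xrate c la1 la2 mu1 mu2) \<alpha> (level c (c - 1)) (c, k) (c - 1, l))"

definition A1mat :: "nat \<Rightarrow> real \<Rightarrow> complex mat" where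
  "A1mat c la1 = complex_of_real la1 \<cdot>\<^sub>m 1\<^sub>m c"

definition Am1mat :: "nat \<Rightarrow> real \<Rightarrow> complex mat" where
  "Am1mat c mu1 = mat c c (\<lambda>(j, k). if j = k then complex_of_real ((real c - real j) * mu1) else 0)"

definition A0mat :: "nat \<Rightarrow> real \<Rightarrow> real \<Rightarrow> real \<Rightarrow> real \<Rightarrow> complex mat" where
  "A0mat c la1 la2 mu1 mu2 = mat c c (\<lambda>(j, k).
     if k = j + 1 then complex_of_real la2
     else if j = k + 1 then complex_of_real (real j * mu2)
     else if j = k then complex_of_real (-(la2 + real j * mu2 + la1 + (real c - real j) * mu1))
     else 0)"

text \<open>Joint CTMC (queue length n, count k of an independent rate-theta Poisson process)
 for an M/M/1 queue with arrival rate lambda and service rate mu.\<close>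
definition MM1rate :: "real \<Rightarrow> real \<Rightarrow> real \<Rightarrow> nat \<times> nat \<Rightarrow> nat \<times> nat \<Rightarrow> real" where
  "MM1rate lam mu th z z' =
     (let n = fst z; k = snd z in
      if z' = (n + 1, k) then lam
      else if n \<ge> 1 \<and> z' = (n - 1, k) then mu
      else if z' = (n, k + 1) then th
      else 0)"

text \<open>w_m^{lambda,mu,theta}(alpha) = E[exp(-alpha B) 1{Lambda_theta(B) = m}], B the busy
 period started with one customer = first time the queue length hits 0.\<close>
definition busy_w :: "real \<Rightarrow> real \<Rightarrow> real \<Rightarrow> nat \<Rightarrow> complex \<Rightarrow> complex" where
  "busy_w lam mu th m \<alpha> = hit_LT (MM1rate lam mu th) \<alpha> {z. fst z = 0} (1, 0) (0, m)"

definition Wmat :: "nat \<Rightarrow> real \<Rightarrow> real \<Rightarrow> real \<Rightarrow> nat \<Rightarrow> complex \<Rightarrow> complex mat" where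
  "Wmat c la1 la2 mu2 m \<alpha> = mat c c (\<lambda>(k, l).
     if k = c - 1 \<and> l = c - 1 then complex_of_real la2 * busy_w la2 (real c * mu2) la1 m \<alpha> else 0)"

end

theory Submission
  imports Defs "Jordan_Normal_Form.Determinant"
begin

definition Hset :: "'a set \<Rightarrow> 'a \<Rightarrow> 'a list set" where
  "Hset A y = {p. p \<noteq> [] \<and> last p = y \<and> y \<in> A \<and> set (butlast p) \<inter> A = {}}"

definition Hall :: "'a set \<Rightarrow> 'a list set" where
  "Hall A = {p. p \<noteq> [] \<and> last p \<in> A \<and> set (butlast p) \<inter> A = {}}"

lemma hit_Hset: "hit_LT q \<alpha> A z y = infsum (path_weight q \<alpha> z) (Hset A y)"
  unfolding hit_LT_def Hset_def by simp

lemma Hset_Hall: "Hset A y \<subseteq> Hall A"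
  unfolding Hset_def Hall_def by auto

definition fac :: "('a \<Rightarrow> 'a \<Rightarrow> real) \<Rightarrow> complex \<Rightarrow> 'a \<Rightarrow> 'a \<Rightarrow> complex" where
  "fac q \<alpha> z v = (if v = z then 0 else complex_of_real (q z v) / (complex_of_real (out_rate q z) + \<alpha>))"

lemma pw_Cons: "path_weight q \<alpha> z (v # p) = fac q \<alpha> z v * path_weight q \<alpha> v p"
  by (simp add: fac_def)

lemma pw_Nil: "path_weight q \<alpha> z [] = 1"
  by simp

lemma pw_append: "path_weight q \<alpha> z (xs @ ys) = path_weight q \<alpha> z xs * path_weight q \<alpha> (last (z # xs)) ys"
  by (induction xs arbitrary: z) (auto simp: mult.assoc)

definition rateok :: "('a \<Rightarrow> 'a \<Rightarrow> real) \<Rightarrow> bool" where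
  "rateok q \<longleftrightarrow> (\<forall>z z'. q z z' \<ge> 0) \<and> (\<forall>z. finite {z'. q z z' \<noteq> 0})"

lemma out_rate_sum:
  assumes "finite S" "\<And>v. q z v \<noteq> 0 \<Longrightarrow> v \<in> S"
  shows "out_rate q z = sum (q z) (S - {z})"
proof -
  have "out_rate q z = infsum (q z) (S - {z})"
    unfolding out_rate_def by (rule infsum_cong_neutral) (use assms in auto)
  then show ?thesis using assms by simp
qed

lemma out_rate_nonneg: "rateok q \<Longrightarrow> out_rate q z \<ge> 0"
  unfolding out_rate_def rateok_def by (simp add: infsum_nonneg)

lemma sum_fac_le:
  assumes q: "rateok q" and a: "Re \<alpha> > 0" and V: "finite V"
  shows "(\<Sum>v\<in>V. cmod (fac q \<alpha> z v)) \<le> 1"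
proof -
  define S where "S = {z'. q z z' \<noteq> 0}"
  have fS: "finite S" using q unfolding rateok_def S_def by auto
  have out: "out_rate q z = sum (q z) (S - {z})"
    by (rule out_rate_sum) (use fS S_def in auto)
  define D where "D = cmod (complex_of_real (out_rate q z) + \<alpha>)"
  have o0: "out_rate q z \<ge> 0" using out_rate_nonneg[OF q] .
  have "Re (complex_of_real (out_rate q z) + \<alpha>) \<le> D" unfolding D_def by (rule complex_Re_le_cmod)
  then have D1: "out_rate q z + Re \<alpha> \<le> D" by simp
  then have Dpos: "D > 0" using a o0 by linarith
  have fv: "cmod (fac q \<alpha> z v) = (if v = z \<or> v \<notin> S then 0 else q z v / D)" for v
    using q unfolding fac_def D_def S_def rateok_def by (auto simp: norm_divide)
  have "(\<Sum>v\<in>V. cmod (fac q \<alpha> z v)) = (\<Sum>v\<in>V. if v \<in> S - {z} then q z v / D else 0)"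
    by (rule sum.cong) (auto simp: fv)
  also have "\<dots> = (\<Sum>v\<in>V \<inter> (S - {z}). q z v / D)"
    using V by (simp add: sum.If_cases Int_def)
  also have "\<dots> \<le> (\<Sum>v\<in>S - {z}. q z v / D)"
    apply (rule sum_mono2) using fS q Dpos unfolding rateok_def by auto
  also have "\<dots> = out_rate q z / D" by (simp add: out sum_divide_distrib)
  also have "\<dots> \<le> 1" using D1 Dpos a o0 by (simp add: divide_le_eq_1)
  finally show ?thesis .
qed

lemma Hall_finite_bound:
  assumes q: "rateok q" and a: "Re \<alpha> > 0"
  shows "finite F \<Longrightarrow> F \<subseteq> Hall A \<Longrightarrow> (\<forall>p\<in>F. length p \<le> n) \<Longrightarrow>
     (\<Sum>p\<in>F. cmod (path_weight q \<alpha> z p)) \<le> 1"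
proof (induction n arbitrary: z F)
  case 0
  then have "F = {}" unfolding Hall_def by auto
  then show ?case by simp
next
  case (Suc n)
  define R where "R v = tl ` {p\<in>F. hd p = v}" for v
  have ne: "p \<noteq> []" if "p \<in> F" for p using Suc.prems that unfolding Hall_def by auto
  have "(\<Sum>p\<in>F. cmod (path_weight q \<alpha> z p)) =
        (\<Sum>p\<in>F. (\<lambda>(v,r). cmod (fac q \<alpha> z v) * cmod (path_weight q \<alpha> v r)) (hd p, tl p))"
    apply (rule sum.cong, simp)
    subgoal for p using ne[of p] by (cases p) (auto simp del: path_weight.simps simp add: pw_Cons norm_mult)
    done
  also have "\<dots> = (\<Sum>x\<in>(\<lambda>p. (hd p, tl p)) ` F. (\<lambda>(v,r). cmod (fac q \<alpha> z v) * cmod (path_weight q \<alpha> v r)) x)"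
    apply (subst sum.reindex)
    subgoal unfolding inj_on_def using ne by (metis list.collapse prod.inject)
    by simp
  also have "(\<lambda>p. (hd p, tl p)) ` F = Sigma (hd ` F) R"
    unfolding R_def apply auto
    subgoal for x xa by (rule image_eqI[of _ _ xa]) auto
    done
  also have "(\<Sum>x\<in>Sigma (hd ` F) R. (\<lambda>(v,r). cmod (fac q \<alpha> z v) * cmod (path_weight q \<alpha> v r)) x)
      = (\<Sum>v\<in>hd ` F. cmod (fac q \<alpha> z v) * (\<Sum>r\<in>R v. cmod (path_weight q \<alpha> v r)))"
    by (subst sum.Sigma[symmetric]) (auto simp: R_def Suc.prems sum_distrib_left)
  also have "\<dots> \<le> (\<Sum>v\<in>hd ` F. cmod (fac q \<alpha> z v) * 1)"
  proof (rule sum_mono)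
    fix v assume v: "v \<in> hd ` F"
    have fR: "finite (R v)" unfolding R_def using Suc.prems by auto
    have "(\<Sum>r\<in>R v. cmod (path_weight q \<alpha> v r)) \<le> 1"
    proof (cases "v \<in> A")
      case True
      have "R v \<subseteq> {[]}"
      proof
        fix r assume "r \<in> R v"
        then obtain p where p: "p \<in> F" "hd p = v" "r = tl p" unfolding R_def by auto
        then have pe: "p = v # r" using ne by (metis list.collapse)
        have "v # r \<in> Hall A" using Suc.prems(2) p(1) pe by auto
        show "r \<in> {[]}"
        proof (rule ccontr)
          assume "r \<notin> {[]}"
          then have "v \<in> set (butlast (v#r))" by simp
          then show False using \<open>v # r \<in> Hall A\<close> True unfolding Hall_def by blast
        qed
      qed
      then have "R v = {} \<or> R v = {[]}" by (rule subset_singletonD)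
      then show ?thesis by (elim disjE) simp_all
    next
      case False
      have "R v \<subseteq> Hall A" "\<forall>r\<in>R v. length r \<le> n"
      proof -
        show "R v \<subseteq> Hall A"
        proof
          fix r assume "r \<in> R v"
          then obtain p where p: "p \<in> F" "hd p = v" "r = tl p" unfolding R_def by auto
          then have pe: "p = v # r" using ne by (metis list.collapse)
          have "v # r \<in> Hall A" using Suc.prems(2) p(1) pe by auto
          then have rne: "r \<noteq> []" using False unfolding Hall_def by auto
          then show "r \<in> Hall A" using \<open>v # r \<in> Hall A\<close> unfolding Hall_def
            by (auto simp: butlast.simps(2))
        qed
        show "\<forall>r\<in>R v. length r \<le> n" using Suc.prems unfolding R_def by auto
      qed
      then show ?thesis using Suc.IH fR by blast
    qed
    then show "cmod (fac q \<alpha> z v) * (\<Sum>r\<in>R v. cmod (path_weight q \<alpha> v r)) \<le> cmod (fac q \<alpha> z v) * 1"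
      by (rule mult_left_mono) simp
  qed
  also have "\<dots> \<le> 1" using sum_fac_le[OF q a] Suc.prems by simp
  finally show ?case .
qed

lemma Hall_bound:
  assumes q: "rateok q" and a: "Re \<alpha> > 0" and F: "finite F" "F \<subseteq> Hall A"
  shows "(\<Sum>p\<in>F. cmod (path_weight q \<alpha> z p)) \<le> 1"
proof -
  define n where "n = Max (length ` F)"
  have "\<forall>p\<in>F. length p \<le> n" unfolding n_def using F by auto
  then show ?thesis using Hall_finite_bound[OF q a F] by blast
qed

lemma Hall_abs_summable:
  assumes q: "rateok q" and a: "Re \<alpha> > 0" and S: "S \<subseteq> Hall A"
  shows "(\<lambda>p. cmod (path_weight q \<alpha> z p)) summable_on S"
    and "path_weight q \<alpha> z summable_on S"
    and "infsum (\<lambda>p. cmod (path_weight q \<alpha> z p)) S \<le> 1"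
proof -
  have bb: "\<And>F. finite F \<Longrightarrow> F \<subseteq> S \<Longrightarrow> (\<Sum>p\<in>F. cmod (path_weight q \<alpha> z p)) \<le> 1"
    using Hall_bound[OF q a] S by blast
  have b: "bdd_above (sum (\<lambda>p. norm (path_weight q \<alpha> z p)) ` {F. F\<subseteq>S \<and> finite F})"
    using bb by (intro bdd_aboveI[of _ 1]) auto
  then show "(\<lambda>p. cmod (path_weight q \<alpha> z p)) summable_on S"
    using abs_summable_iff_bdd_above by auto
  then show "path_weight q \<alpha> z summable_on S"
    using abs_summable_summable by blast
  show "infsum (\<lambda>p. cmod (path_weight q \<alpha> z p)) S \<le> 1"
    apply (rule infsum_le_finite_sums)
     apply (fact \<open>(\<lambda>p. cmod (path_weight q \<alpha> z p)) summable_on S\<close>)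
    using Hall_bound[OF q a] S by (meson order_trans)
qed


definition tval :: "('a \<Rightarrow> 'a \<Rightarrow> real) \<Rightarrow> complex \<Rightarrow> 'a set \<Rightarrow> 'a \<Rightarrow> 'a \<Rightarrow> complex" where
  "tval q \<alpha> A w y = (if w \<in> A then (if w = y then 1 else 0) else hit_LT q \<alpha> A w y)"

definition Tset :: "'a set \<Rightarrow> 'a \<Rightarrow> 'a \<Rightarrow> 'a list set" where
  "Tset A y w = (if w \<in> A then (if w = y then {[]} else {}) else Hset A y)"

lemma Tset_tval: "infsum (path_weight q \<alpha> w) (Tset A y w) = tval q \<alpha> A w y"
  unfolding Tset_def tval_def by (simp add: hit_Hset)

lemma Tset_summable:
  assumes q: "rateok q" and a: "Re \<alpha> > 0"
  shows "path_weight q \<alpha> w summable_on (Tset A y w)"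
  unfolding Tset_def using Hall_abs_summable(2)[OF q a Hset_Hall] by auto

definition splt :: "'a set \<Rightarrow> 'a list \<Rightarrow> ('a \<times> 'a list) \<times> 'a list" where
  "splt B p = ((hd (dropWhile (\<lambda>x. x \<notin> B) p), takeWhile (\<lambda>x. x \<notin> B) p @ [hd (dropWhile (\<lambda>x. x \<notin> B) p)]),
      tl (dropWhile (\<lambda>x. x \<notin> B) p))"

definition SS :: "'a set \<Rightarrow> 'a set \<Rightarrow> 'a \<Rightarrow> (('a \<times> 'a list) \<times> 'a list) set" where
  "SS A B y = Sigma (Sigma B (Hset B)) (\<lambda>(w,p1). Tset A y w)"

lemma SS_mem: "((w,p1),p2) \<in> SS A B y \<longleftrightarrow> w \<in> B \<and> p1 \<in> Hset B w \<and> p2 \<in> Tset A y w"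
  unfolding SS_def by auto

lemma split_in:
  assumes AB: "A \<subseteq> B" and m: "((w,p1),p2) \<in> SS A B y"
  shows "p1 @ p2 \<in> Hset A y" "splt B (p1 @ p2) = ((w,p1),p2)" "last p1 = w"
proof -
  have w: "w \<in> B" and p1: "p1 \<in> Hset B w" and p2: "p2 \<in> Tset A y w" using m by (auto simp: SS_mem)
  have p1e: "p1 = butlast p1 @ [w]" and bl: "set (butlast p1) \<inter> B = {}"
    using p1 unfolding Hset_def by auto
  show "last p1 = w" using p1 unfolding Hset_def by auto
  have e: "p1 @ p2 = butlast p1 @ w # p2" by (subst p1e) simp
  have tw: "takeWhile (\<lambda>x. x \<notin> B) (p1 @ p2) = butlast p1"
    unfolding e using bl w by (subst takeWhile_append2) auto
  have dw: "dropWhile (\<lambda>x. x \<notin> B) (p1 @ p2) = w # p2"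
    unfolding e using bl w by (subst dropWhile_append2) auto
  show "splt B (p1 @ p2) = ((w,p1),p2)"
    unfolding splt_def tw dw using p1e by simp
  show "p1 @ p2 \<in> Hset A y"
  proof (cases "w \<in> A")
    case True
    then have "p2 = []" "w = y" using p2 unfolding Tset_def by (auto split: if_splits)
    then show ?thesis using p1 AB True unfolding Hset_def by auto
  next
    case False
    then have p2H: "p2 \<in> Hset A y" using p2 unfolding Tset_def by auto
    then have "p2 \<noteq> []" unfolding Hset_def by auto
    then have "butlast (p1 @ p2) = p1 @ butlast p2" by (simp add: butlast_append)
    moreover have "set p1 \<inter> A = {}" using bl AB False by (subst p1e) auto
    ultimately show ?thesis using p2H \<open>p2 \<noteq> []\<close> unfolding Hset_def by auto
  qed
qed

lemma split_out:
  assumes AB: "A \<subseteq> B" and p: "p \<in> Hset A y"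
  shows "splt B p \<in> SS A B y" "(\<lambda>((w,p1),p2). p1 @ p2) (splt B p) = p"
proof -
  define dw where "dw = dropWhile (\<lambda>x. x \<notin> B) p"
  define tw where "tw = takeWhile (\<lambda>x. x \<notin> B) p"
  have pe: "p = tw @ dw" unfolding tw_def dw_def by simp
  have yA: "y \<in> A" and lp: "last p = y" and pne: "p \<noteq> []" and bA: "set (butlast p) \<inter> A = {}"
    using p unfolding Hset_def by auto
  have "y \<in> set p" using lp pne by auto
  then have dne: "dw \<noteq> []" unfolding dw_def using yA AB by auto
  define w where "w = hd dw"
  have wB: "w \<in> B" unfolding w_def dw_def using hd_dropWhile dne dw_def by blast
  define r where "r = tl dw"
  have dwe: "dw = w # r" unfolding w_def r_def using dne by simp
  have pe2: "p = tw @ w # r" using pe dwe by simp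
  have twB: "set tw \<inter> B = {}" unfolding tw_def by (auto dest: set_takeWhileD)
  have sp: "splt B p = ((w, tw @ [w]), r)" unfolding splt_def w_def dw_def tw_def r_def by simp
  show "(\<lambda>((w,p1),p2). p1 @ p2) (splt B p) = p" unfolding sp using pe2 by simp
  have h1: "tw @ [w] \<in> Hset B w" unfolding Hset_def using wB twB by auto
  have h2: "r \<in> Tset A y w"
  proof (cases "w \<in> A")
    case True
    have "r = []"
    proof (rule ccontr)
      assume rne: "r \<noteq> []"
      have "butlast p = tw @ w # butlast r" unfolding pe2 using rne by (simp add: butlast_append)
      then show False using bA True by auto
    qed
    then have "last p = w" unfolding pe2 by simp
    then show ?thesis using True lp unfolding Tset_def \<open>r = []\<close> by simp
  next
    case False
    have tne: "r \<noteq> []"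
    proof
      assume "r = []"
      then have "last p = w" unfolding pe2 by simp
      then show False using False lp yA by simp
    qed
    have "last r = y" using tne lp unfolding pe2 by simp
    moreover have "butlast p = tw @ w # butlast r" unfolding pe2 using tne by (simp add: butlast_append)
    then have "set (butlast r) \<subseteq> set (butlast p)" by auto
    ultimately have "r \<in> Hset A y" using tne yA bA unfolding Hset_def by auto
    then show ?thesis using False unfolding Tset_def by simp
  qed
  show "splt B p \<in> SS A B y" unfolding sp SS_mem using wB h1 h2 by auto
qed

lemma split_hit:
  assumes q: "rateok q" and a: "Re \<alpha> > 0" and AB: "A \<subseteq> B"
  shows "hit_LT q \<alpha> A z y = infsum (\<lambda>w. hit_LT q \<alpha> B z w * tval q \<alpha> A w y) B"
proof -
  let ?g = "\<lambda>((w,p1),p2). path_weight q \<alpha> z p1 * path_weight q \<alpha> w p2"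
  let ?j = "\<lambda>((w::'a,p1),p2). p1 @ p2"
  have g_eq: "path_weight q \<alpha> z (?j x) = ?g x" if "x \<in> SS A B y" for x
  proof -
    obtain w p1 p2 where x: "x = ((w,p1),p2)" by (metis prod.collapse)
    have "p1 \<noteq> []" using that unfolding x SS_mem Hset_def by auto
    then have "last (z # p1) = w" using split_in(3)[OF AB that[unfolded x]] by simp
    then show ?thesis unfolding x by (simp add: pw_append)
  qed
  have sumH: "path_weight q \<alpha> z summable_on Hset A y"
    using Hall_abs_summable(2)[OF q a Hset_Hall] .
  have e1: "hit_LT q \<alpha> A z y = infsum ?g (SS A B y)"
    unfolding hit_Hset
    apply (rule infsum_reindex_bij_witness[of "SS A B y" "splt B" ?j "Hset A y", symmetric])
    using split_in[OF AB] split_out[OF AB] g_eq by auto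
  have s1: "?g summable_on (SS A B y)"
    apply (subst summable_on_reindex_bij_witness[of "SS A B y" "splt B" ?j "Hset A y" "path_weight q \<alpha> z"])
    using split_in[OF AB] split_out[OF AB] g_eq sumH by auto
  let ?f = "\<lambda>(w,p1) p2. path_weight q \<alpha> z p1 * path_weight q \<alpha> w p2"
  have s1': "(\<lambda>(x,y). ?f x y) summable_on Sigma (Sigma B (Hset B)) (\<lambda>(w,p1). Tset A y w)"
    using s1 unfolding SS_def by (simp add: case_prod_unfold)
  have e2: "infsum ?g (SS A B y) = infsum (\<lambda>x. infsum (?f x) ((\<lambda>(w,p1). Tset A y w) x)) (Sigma B (Hset B))"
    using infsum_Sigma'_banach[OF s1'] unfolding SS_def by (simp add: case_prod_unfold)
  have inner: "infsum (?f x) ((\<lambda>(w,p1). Tset A y w) x) = (\<lambda>(w,p1). path_weight q \<alpha> z p1 * tval q \<alpha> A w y) x" for x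
  proof -
    obtain w p1 where x: "x = (w,p1)" by fastforce
    show ?thesis unfolding x
      using infsum_cmult_right[OF Tset_summable[OF q a], of "path_weight q \<alpha> z p1" w A y]
      by (simp add: Tset_tval)
  qed
  have s2: "(\<lambda>x. infsum (?f x) ((\<lambda>(w,p1). Tset A y w) x)) summable_on (Sigma B (Hset B))"
    using summable_on_Sigma_banach[OF s1'] .
  have s2': "(\<lambda>(w,p1). path_weight q \<alpha> z p1 * tval q \<alpha> A w y) summable_on (Sigma B (Hset B))"
    using s2 unfolding inner .
  have e3: "infsum (\<lambda>(w,p1). path_weight q \<alpha> z p1 * tval q \<alpha> A w y) (Sigma B (Hset B))
      = infsum (\<lambda>w. infsum (\<lambda>p1. path_weight q \<alpha> z p1 * tval q \<alpha> A w y) (Hset B w)) B"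
    using infsum_Sigma'_banach[of "\<lambda>w p1. path_weight q \<alpha> z p1 * tval q \<alpha> A w y" B "Hset B"] s2'
    by simp
  have e4: "infsum (\<lambda>p1. path_weight q \<alpha> z p1 * tval q \<alpha> A w y) (Hset B w) = hit_LT q \<alpha> B z w * tval q \<alpha> A w y" for w
    unfolding hit_Hset
    by (rule infsum_cmult_left) (rule Hall_abs_summable(2)[OF q a Hset_Hall])
  have e2': "infsum ?g (SS A B y) = infsum (\<lambda>(w,p1). path_weight q \<alpha> z p1 * tval q \<alpha> A w y) (Sigma B (Hset B))"
    using e2 unfolding inner .
  show ?thesis
    unfolding e1 e2' e3 e4 ..
qed

lemma Hset_UNIV: "Hset UNIV w = {[w]}"
  unfolding Hset_def apply auto
  subgoal for p by (cases p rule: rev_cases) auto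
  done

lemma pw_single: "path_weight q \<alpha> z [w] = fac q \<alpha> z w"
  by (simp add: fac_def)

lemma first_step:
  assumes q: "rateok q" and a: "Re \<alpha> > 0"
  shows "hit_LT q \<alpha> A z y = infsum (\<lambda>w. fac q \<alpha> z w * tval q \<alpha> A w y) UNIV"
  using split_hit[OF q a, of A UNIV z y]
  by (simp add: hit_Hset Hset_UNIV pw_single del: path_weight.simps)


context
  fixes q1 :: "'a \<Rightarrow> 'a \<Rightarrow> real" and q2 :: "'b \<Rightarrow> 'b \<Rightarrow> real" and f :: "'a \<Rightarrow> 'b"
    and P :: "'a set" and z :: 'a and A1 :: "'a set" and A2 :: "'b set" and \<alpha> :: complex
  assumes inj: "inj f"
    and good: "\<And>u. u \<in> P \<Longrightarrow> (u = z \<or> u \<notin> A1) \<Longrightarrow>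
       (\<forall>v. q2 (f u) (f v) = q1 u v) \<and> (\<forall>v2. q2 (f u) v2 \<noteq> 0 \<longrightarrow> v2 \<in> range f)
       \<and> (\<forall>v. q1 u v \<noteq> 0 \<longrightarrow> v \<noteq> u \<longrightarrow> v \<in> P)"
    and zP: "z \<in> P"
    and AA: "\<And>v. v \<in> P \<Longrightarrow> f v \<in> A2 \<longleftrightarrow> v \<in> A1"
begin

lemma tr_out:
  assumes "u \<in> P" "u = z \<or> u \<notin> A1"
  shows "out_rate q2 (f u) = out_rate q1 u"
proof -
  have g: "\<forall>v. q2 (f u) (f v) = q1 u v" "\<forall>v2. q2 (f u) v2 \<noteq> 0 \<longrightarrow> v2 \<in> range f"
    using good[OF assms] by auto
  have "out_rate q2 (f u) = infsum (q2 (f u)) (f ` (UNIV - {u}))"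
    unfolding out_rate_def
    apply (rule infsum_cong_neutral)
    using g(2) inj by (auto simp: inj_eq)
  also have "\<dots> = infsum (q2 (f u) \<circ> f) (UNIV - {u})"
    by (rule infsum_reindex) (use inj in \<open>auto simp: inj_on_def\<close>)
  also have "\<dots> = out_rate q1 u" unfolding out_rate_def using g(1) by (simp add: o_def)
  finally show ?thesis .
qed

lemma tr_fac:
  assumes "u \<in> P" "u = z \<or> u \<notin> A1"
  shows "fac q2 \<alpha> (f u) (f v) = fac q1 \<alpha> u v"
  using good[OF assms] tr_out[OF assms] inj unfolding fac_def by (auto simp: inj_eq)

lemma tr_E:
  "u \<in> P \<Longrightarrow> (u = z \<or> u \<notin> A1) \<Longrightarrow> set p \<subseteq> P \<Longrightarrow> set (butlast p) \<inter> A1 = {} \<Longrightarrow>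
    path_weight q2 \<alpha> (f u) (map f p) = path_weight q1 \<alpha> u p"
proof (induction p arbitrary: u)
  case Nil
  then show ?case by simp
next
  case (Cons v r)
  have fe: "fac q2 \<alpha> (f u) (f v) = fac q1 \<alpha> u v" using tr_fac Cons.prems by blast
  show ?case
  proof (cases "r = []")
    case True
    then show ?thesis using fe by (simp add: pw_Cons del: path_weight.simps(2))
  next
    case False
    then have "v \<notin> A1" using Cons.prems(4) by auto
    moreover have "set (butlast r) \<inter> A1 = {}" using Cons.prems(4) False
      by (auto simp: in_set_butlastD)
    ultimately have "path_weight q2 \<alpha> (f v) (map f r) = path_weight q1 \<alpha> v r"
      using Cons.IH[of v] Cons.prems by auto
    then show ?thesis using fe by (simp add: pw_Cons del: path_weight.simps)
  qed
qed

lemma tr_Z1: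
  "u \<in> P \<Longrightarrow> (u = z \<or> u \<notin> A1) \<Longrightarrow> path_weight q1 \<alpha> u p \<noteq> 0 \<Longrightarrow> set (butlast p) \<inter> A1 = {} \<Longrightarrow>
    set p \<subseteq> P"
proof (induction p arbitrary: u)
  case Nil
  then show ?case by simp
next
  case (Cons v r)
  have "fac q1 \<alpha> u v \<noteq> 0" and pr: "path_weight q1 \<alpha> v r \<noteq> 0"
    using Cons.prems(3) by (auto simp: pw_Cons simp del: path_weight.simps)
  then have "v \<noteq> u" "q1 u v \<noteq> 0" unfolding fac_def by (auto split: if_splits)
  then have vP: "v \<in> P" using good[OF Cons.prems(1,2)] by auto
  show ?case
  proof (cases "r = []")
    case True
    then show ?thesis using vP by simp
  next
    case False
    then have "v \<notin> A1" using Cons.prems(4) by auto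
    moreover have "set (butlast r) \<inter> A1 = {}" using Cons.prems(4) False
      by (auto simp: in_set_butlastD)
    ultimately show ?thesis using Cons.IH[of v] vP pr by auto
  qed
qed

lemma tr_Z2:
  "u \<in> P \<Longrightarrow> (u = z \<or> u \<notin> A1) \<Longrightarrow> path_weight q2 \<alpha> (f u) p2 \<noteq> 0 \<Longrightarrow> set (butlast p2) \<inter> A2 = {} \<Longrightarrow>
    \<exists>p. p2 = map f p \<and> set p \<subseteq> P"
proof (induction p2 arbitrary: u)
  case Nil
  then show ?case by simp
next
  case (Cons v2 r)
  have "fac q2 \<alpha> (f u) v2 \<noteq> 0" and pr: "path_weight q2 \<alpha> v2 r \<noteq> 0"
    using Cons.prems(3) by (auto simp: pw_Cons simp del: path_weight.simps)
  then have ne: "v2 \<noteq> f u" "q2 (f u) v2 \<noteq> 0" unfolding fac_def by (auto split: if_splits)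
  then obtain v where v: "v2 = f v" using good[OF Cons.prems(1,2)] by auto
  then have "q1 u v \<noteq> 0" "v \<noteq> u" using good[OF Cons.prems(1,2)] ne by auto
  then have vP: "v \<in> P" using good[OF Cons.prems(1,2)] by auto
  show ?case
  proof (cases "r = []")
    case True
    then show ?thesis using vP v by (intro exI[of _ "[v]"]) simp
  next
    case False
    then have "f v \<notin> A2" using Cons.prems(4) v by auto
    then have "v \<notin> A1" using AA vP by auto
    moreover have "set (butlast r) \<inter> A2 = {}" using Cons.prems(4) False
      by (auto simp: in_set_butlastD)
    ultimately obtain p where "r = map f p" "set p \<subseteq> P" using Cons.IH[of v] vP pr v by auto
    then show ?thesis using vP v by (intro exI[of _ "v # p"]) simp
  qed
qed

lemma transfer_hit: "hit_LT q2 \<alpha> A2 (f z) (f y) = hit_LT q1 \<alpha> A1 z y"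
proof -
  define S1 where "S1 = {p \<in> Hset A1 y. set p \<subseteq> P}"
  have "hit_LT q1 \<alpha> A1 z y = infsum (path_weight q1 \<alpha> z) S1"
    unfolding hit_Hset S1_def
    apply (rule infsum_cong_neutral)
    using tr_Z1[OF zP] unfolding Hset_def by auto
  also have "\<dots> = infsum (path_weight q2 \<alpha> (f z) \<circ> map f) S1"
    apply (rule infsum_cong)
    using tr_E[OF zP] unfolding S1_def Hset_def by auto
  also have "\<dots> = infsum (path_weight q2 \<alpha> (f z)) (map f ` S1)"
    apply (rule infsum_reindex[symmetric])
    using inj by (simp add: inj_on_def inj_map_eq_map)
  also have "\<dots> = infsum (path_weight q2 \<alpha> (f z)) (Hset A2 (f y))"
  proof (rule infsum_cong_neutral)
    fix p2 assume p2: "p2 \<in> Hset A2 (f y) - map f ` S1"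
    show "path_weight q2 \<alpha> (f z) p2 = 0"
    proof (rule ccontr)
      assume nz: "path_weight q2 \<alpha> (f z) p2 \<noteq> 0"
      have h: "p2 \<noteq> []" "last p2 = f y" "f y \<in> A2" "set (butlast p2) \<inter> A2 = {}"
        using p2 unfolding Hset_def by auto
      obtain p where p: "p2 = map f p" "set p \<subseteq> P" using tr_Z2[OF zP _ nz h(4)] by auto
      have "p \<noteq> []" using h p by auto
      then have ly: "last p = y" using h(2) p inj by (simp add: last_map inj_eq)
      then have yP: "y \<in> P" using p \<open>p \<noteq> []\<close> by auto
      have "y \<in> A1" using AA[OF yP] h by simp
      moreover have "set (butlast p) \<inter> A1 = {}"
      proof -
        have "\<forall>v\<in>set (butlast p). v \<in> P \<and> f v \<notin> A2"
          using h(4) p by (auto simp: map_butlast[symmetric] dest: in_set_butlastD)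
        then show ?thesis using AA by auto
      qed
      ultimately have "p \<in> S1" unfolding S1_def Hset_def using \<open>p \<noteq> []\<close> ly p by auto
      then show False using p2 p by auto
    qed
  next
    fix p2 assume "p2 \<in> map f ` S1 - Hset A2 (f y)"
    then obtain p where p: "p \<in> S1" "p2 = map f p" "p2 \<notin> Hset A2 (f y)" by auto
    have h: "p \<noteq> []" "last p = y" "y \<in> A1" "set (butlast p) \<inter> A1 = {}" "set p \<subseteq> P"
      using p unfolding S1_def Hset_def by auto
    have "y \<in> P" using h by auto
    then have "f y \<in> A2" using AA h by auto
    moreover have "set (butlast p2) \<inter> A2 = {}"
      using h AA p(2) by (auto simp: map_butlast[symmetric] dest: in_set_butlastD)
    ultimately have "p2 \<in> Hset A2 (f y)" using h p(2) unfolding Hset_def by (auto simp: last_map)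
    then show "path_weight q2 \<alpha> (f z) p2 = 0" using p by auto
  qed simp
  finally show ?thesis by (simp add: hit_Hset)
qed

lemma transfer_hit0:
  assumes "y2 \<notin> f ` P"
  shows "hit_LT q2 \<alpha> A2 (f z) y2 = 0"
proof -
  have "path_weight q2 \<alpha> (f z) p2 = 0" if p2: "p2 \<in> Hset A2 y2" for p2
  proof (rule ccontr)
    assume nz: "path_weight q2 \<alpha> (f z) p2 \<noteq> 0"
    have h: "p2 \<noteq> []" "last p2 = y2" "set (butlast p2) \<inter> A2 = {}"
      using p2 unfolding Hset_def by auto
    obtain p where p: "p2 = map f p" "set p \<subseteq> P" using tr_Z2[OF zP _ nz h(3)] by auto
    then have "p \<noteq> []" using h by auto
    then have "y2 = f (last p)" "last p \<in> P" using h p by (auto simp: last_map)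
    then show False using assms by auto
  qed
  then show ?thesis unfolding hit_Hset by (simp add: infsum_0)
qed

end


lemma Xrate_eq: "Xrate c la1 la2 mu1 mu2 (i,j) v =
   (if v = (i+1,j) then la1 else if v = (i,j+1) then la2
    else if i \<ge> 1 \<and> v = (i-1,j) then max (min (real i) (real c - real j)) 0 * mu1
    else if j \<ge> 1 \<and> v = (i,j-1) then min (real c) (real j) * mu2 else 0)"
  by (simp add: Xrate_def)

lemma MM1rate_eq: "MM1rate lam mu th (n,k) v =
   (if v = (n+1,k) then lam else if n \<ge> 1 \<and> v = (n-1,k) then mu else if v = (n,k+1) then th else 0)"
  by (simp add: MM1rate_def)

lemma rateok_X:
  assumes "la1 \<ge> 0" "la2 \<ge> 0" "mu1 \<ge> 0" "mu2 \<ge> 0"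
  shows "rateok (Xrate c la1 la2 mu1 mu2)"
  unfolding rateok_def
proof (intro conjI allI)
  fix z z' :: "nat \<times> nat"
  show "Xrate c la1 la2 mu1 mu2 z z' \<ge> 0"
    using assms by (cases z) (auto simp: Xrate_eq)
next
  fix z :: "nat \<times> nat"
  obtain i j where z: "z = (i,j)" by fastforce
  have "{z'. Xrate c la1 la2 mu1 mu2 z z' \<noteq> 0} \<subseteq> {(i+1,j),(i,j+1),(i-1,j),(i,j-1)}"
    unfolding z by (auto simp: Xrate_eq split: if_splits)
  then show "finite {z'. Xrate c la1 la2 mu1 mu2 z z' \<noteq> 0}" by (rule finite_subset) simp
qed

lemma rateok_MM1:
  assumes "lam \<ge> 0" "mu \<ge> 0" "th \<ge> 0"
  shows "rateok (MM1rate lam mu th)"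
  unfolding rateok_def
proof (intro conjI allI)
  fix z z' :: "nat \<times> nat"
  show "MM1rate lam mu th z z' \<ge> 0"
    using assms by (cases z) (auto simp: MM1rate_eq)
next
  fix z :: "nat \<times> nat"
  obtain i j where z: "z = (i,j)" by fastforce
  have "{z'. MM1rate lam mu th z z' \<noteq> 0} \<subseteq> {(i+1,j),(i-1,j),(i,j+1)}"
    unfolding z by (auto simp: MM1rate_eq split: if_splits)
  then show "finite {z'. MM1rate lam mu th z z' \<noteq> 0}" by (rule finite_subset) simp
qed

lemma sum_hit_le:
  assumes q: "rateok q" and a: "Re \<alpha> > 0" and Y: "finite Y"
  shows "(\<Sum>y\<in>Y. cmod (hit_LT q \<alpha> A z y)) \<le> 1"
proof -
  have "(\<Sum>y\<in>Y. cmod (hit_LT q \<alpha> A z y)) \<le> (\<Sum>y\<in>Y. infsum (\<lambda>p. cmod (path_weight q \<alpha> z p)) (Hset A y))"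
    apply (rule sum_mono) unfolding hit_Hset
    apply (rule norm_infsum_bound)
    using Hall_abs_summable(1)[OF q a Hset_Hall] by blast
  also have "\<dots> = infsum (\<lambda>p. cmod (path_weight q \<alpha> z p)) (\<Union>y\<in>Y. Hset A y)"
    apply (rule sum_infsum[OF Y])
    using Hall_abs_summable(1)[OF q a Hset_Hall] apply blast
    unfolding Hset_def by auto
  also have "\<dots> \<le> 1"
    apply (rule Hall_abs_summable(3)[OF q a, of _ A])
    using Hset_Hall[of A] by blast
  finally show ?thesis .
qed

lemma hit_le1:
  assumes q: "rateok q" and a: "Re \<alpha> > 0"
  shows "cmod (hit_LT q \<alpha> A z y) \<le> 1"
  using sum_hit_le[OF q a, of "{y}"] by simp


lemma level_eq: "level c i = (\<lambda>j. (i,j)) ` {..<c}"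
  unfolding level_def by auto

context
  fixes c :: nat and la1 la2 mu1 mu2 :: real and \<alpha> :: complex
  assumes c1: "c \<ge> 1" and l1: "la1 > 0" and l2: "la2 > 0" and m1: "mu1 > 0" and m2: "mu2 > 0"
    and aa: "Re \<alpha> > 0"
begin

abbreviation "q \<equiv> Xrate c la1 la2 mu1 mu2"
abbreviation "AA \<equiv> level c (c - 1)"

lemma qok: "rateok q" using rateok_X l1 l2 m1 m2 by simp

definition Gf :: "nat \<Rightarrow> nat \<Rightarrow> complex" where
  "Gf k l = hit_LT q \<alpha> AA (c,k) (c-1,l)"

definition Hn :: "nat \<Rightarrow> nat \<Rightarrow> nat \<Rightarrow> complex" where
  "Hn n k l = hit_LT q \<alpha> AA (c-1+n,k) (c-1,l)"

lemma Hn1: "Hn 1 k l = Gf k l"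
  unfolding Hn_def Gf_def using c1 by simp

lemma shift_transfer:
  assumes n: "n \<ge> 1"
  shows "hit_LT q \<alpha> (level c (c-1+n) \<union> AA) (c+n,k) (c-1+n,j) = Gf k j"
    and "fst w < c-1+n \<Longrightarrow> hit_LT q \<alpha> (level c (c-1+n) \<union> AA) (c+n,k) w = 0"
proof -
  define f where "f = (\<lambda>(i::nat,j::nat). (i+n,j))"
  define P where "P = {(i::nat,j::nat). i \<ge> c-1}"
  have inj: "inj f" unfolding f_def inj_def by auto
  have good: "(\<forall>v. q (f u) (f v) = q u v) \<and> (\<forall>v2. q (f u) v2 \<noteq> 0 \<longrightarrow> v2 \<in> range f)
       \<and> (\<forall>v. q u v \<noteq> 0 \<longrightarrow> v \<noteq> u \<longrightarrow> v \<in> P)"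
    if u: "u \<in> P" "u = (c,k) \<or> u \<notin> AA" for u
  proof -
    obtain i j where ue: "u = (i,j)" by fastforce
    have ij: "i \<ge> c \<or> (i = c-1 \<and> j \<ge> c)" using u c1 unfolding ue P_def level_def by auto
    have dn: "max (min (real (i+n)) (real c - real j)) 0 = max (min (real i) (real c - real j)) 0"
      using ij c1 by (auto simp: min_def max_def)
    have a: "q (f u) (f v) = q u v" for v
    proof -
      obtain a b where v: "v = (a,b)" by fastforce
      have e1: "((a+n,b) = (i+n+1,j)) = ((a,b) = (i+1,j))" by auto
      have e2: "((a+n,b) = (i+n,j+1)) = ((a,b) = (i,j+1))" by auto
      have e3: "(1 \<le> i+n \<and> (a+n,b) = (i+n-1,j)) = (1 \<le> i \<and> (a,b) = (i-1,j))" using n by auto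
      have e4: "(1 \<le> j \<and> (a+n,b) = (i+n,j-1)) = (1 \<le> j \<and> (a,b) = (i,j-1))" by auto
      have "q (f u) (f v) = q (i+n,j) (a+n,b)" unfolding ue v f_def by simp
      also have "\<dots> = q (i,j) (a,b)"
        unfolding Xrate_eq[of c la1 la2 mu1 mu2 "i+n" j] Xrate_eq[of c la1 la2 mu1 mu2 i j]
        unfolding e1 e2 e3 e4 dn ..
      finally show ?thesis unfolding ue v .
    qed
    have b: "v2 \<in> range f" if "q (f u) v2 \<noteq> 0" for v2
    proof -
      obtain a b where v: "v2 = (a,b)" by fastforce
      have qq: "q (i+n,j) (a,b) \<noteq> 0" using that unfolding ue v f_def by simp
      have "a \<ge> n"
      proof (rule ccontr)
        assume an: "\<not> a \<ge> n"
        then have "(a,b) \<noteq> (i+n+1,j)" "(a,b) \<noteq> (i+n,j+1)" "(a,b) \<noteq> (i+n,j-1)" by auto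
        then have "1 \<le> i+n \<and> (a,b) = (i+n-1,j) \<and> max (min (real (i+n)) (real c - real j)) 0 * mu1 \<noteq> 0"
          using qq unfolding Xrate_eq[of c la1 la2 mu1 mu2 "i+n" j] by (auto split: if_splits)
        then have "real c - real j > 0" "a = i+n-1" by (auto simp: max_def min_def split: if_splits)
        then have "i \<ge> c" using ij by auto
        then show False using an \<open>a = i+n-1\<close> c1 by auto
      qed
      then have "v2 = f (a-n,b)" unfolding v f_def by auto
      then show ?thesis by blast
    qed
    have cc: "v \<in> P" if "q u v \<noteq> 0" "v \<noteq> u" for v
    proof -
      obtain a b where v: "v = (a,b)" by fastforce
      have qq: "q (i,j) (a,b) \<noteq> 0" using that unfolding ue v by simp
      show ?thesis
      proof (rule ccontr)
        assume an: "v \<notin> P"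
        then have "a < c - 1" unfolding v P_def by auto
        then have "(a,b) \<noteq> (i+1,j)" "(a,b) \<noteq> (i,j+1)" "(a,b) \<noteq> (i,j-1)" using ij by auto
        then have "1 \<le> i \<and> (a,b) = (i-1,j) \<and> max (min (real i) (real c - real j)) 0 * mu1 \<noteq> 0"
          using qq unfolding Xrate_eq[of c la1 la2 mu1 mu2 i j] by (auto split: if_splits)
        then have "real c - real j > 0" "a = i-1" by (auto simp: max_def min_def split: if_splits)
        then have "i \<ge> c" using ij by auto
        then show False using \<open>a < c - 1\<close> \<open>a = i-1\<close> by auto
      qed
    qed
    show ?thesis using a b cc by blast
  qed
  have zP: "(c,k) \<in> P" unfolding P_def by auto
  have AAe: "f v \<in> level c (c-1+n) \<union> AA \<longleftrightarrow> v \<in> AA" if "v \<in> P" for v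
    using that n c1 unfolding f_def P_def level_def by auto
  note T = transfer_hit[of f P "(c,k)" AA q q "level c (c-1+n) \<union> AA", OF inj good zP AAe]
    transfer_hit0[of f P "(c,k)" AA q q "level c (c-1+n) \<union> AA", OF inj good zP AAe]
  have fz: "f (c,k) = (c+n,k)" unfolding f_def by simp
  show "hit_LT q \<alpha> (level c (c-1+n) \<union> AA) (c+n,k) (c-1+n,j) = Gf k j"
    using T(1)[of \<alpha> "(c-1,j)"] unfolding fz Gf_def f_def by simp
  show "hit_LT q \<alpha> (level c (c-1+n) \<union> AA) (c+n,k) w = 0" if "fst w < c-1+n"
    apply (rule T(2)[of w \<alpha>, unfolded fz])
    using that unfolding f_def P_def by auto
qed

lemma Hn_Suc:
  assumes n: "n \<ge> 1"
  shows "Hn (Suc n) k l = (\<Sum>j<c. Gf k j * Hn n j l)"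
proof -
  define B where "B = level c (c-1+n) \<union> AA"
  define y where "y = (c-1,l)"
  have fin: "finite (level c i)" for i unfolding level_eq by simp
  have AB: "AA \<subseteq> B" unfolding B_def by auto
  have "Hn (Suc n) k l = hit_LT q \<alpha> AA (c+n,k) y"
    unfolding Hn_def y_def using c1 by (simp add: add.commute)
  also have "\<dots> = infsum (\<lambda>w. hit_LT q \<alpha> B (c+n,k) w * tval q \<alpha> AA w y) B"
    by (rule split_hit[OF qok aa AB])
  also have "\<dots> = (\<Sum>w\<in>B. hit_LT q \<alpha> B (c+n,k) w * tval q \<alpha> AA w y)"
    unfolding B_def using fin by simp
  also have "\<dots> = (\<Sum>w\<in>level c (c-1+n). hit_LT q \<alpha> B (c+n,k) w * tval q \<alpha> AA w y)
       + (\<Sum>w\<in>AA. hit_LT q \<alpha> B (c+n,k) w * tval q \<alpha> AA w y)"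
    unfolding B_def apply (rule sum.union_disjoint) using fin n unfolding level_def by auto
  also have "(\<Sum>w\<in>AA. hit_LT q \<alpha> B (c+n,k) w * tval q \<alpha> AA w y) = 0"
    apply (rule sum.neutral) using shift_transfer(2)[OF n] n unfolding B_def level_def by auto
  also have "(\<Sum>w\<in>level c (c-1+n). hit_LT q \<alpha> B (c+n,k) w * tval q \<alpha> AA w y)
      = (\<Sum>j<c. hit_LT q \<alpha> B (c+n,k) (c-1+n,j) * tval q \<alpha> AA (c-1+n,j) y)"
    unfolding level_eq by (subst sum.reindex) (auto simp: inj_on_def)
  also have "\<dots> = (\<Sum>j<c. Gf k j * Hn n j l)"
    apply (rule sum.cong, simp)
    subgoal for j
    proof -
      have "(c-1+n, j) \<notin> AA" using n unfolding level_def by auto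
      then have "tval q \<alpha> AA (c-1+n,j) y = Hn n j l" unfolding tval_def Hn_def y_def by simp
      moreover have "hit_LT q \<alpha> B (c+n,k) (c-1+n,j) = Gf k j"
        unfolding B_def by (rule shift_transfer(1)[OF n])
      ultimately show ?thesis by simp
    qed
    done
  finally show ?thesis by simp
qed

lemma busy_transfer:
  shows "hit_LT q \<alpha> {w. snd w < c} (c,c) (c+m,c-1) = busy_w la2 (real c * mu2) la1 m \<alpha>"
    and "\<not> (fst w \<ge> c \<and> snd w \<ge> c-1) \<Longrightarrow> hit_LT q \<alpha> {w. snd w < c} (c,c) w = 0"
proof -
  define f where "f = (\<lambda>(nn::nat,kk::nat). (c+kk, c-1+nn))"
  define q1 where "q1 = MM1rate la2 (real c * mu2) la1"
  define A1 where "A1 = {z::nat\<times>nat. fst z = 0}"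
  have inj: "inj f" unfolding f_def inj_def by auto
  have good: "(\<forall>v. q (f u) (f v) = q1 u v) \<and> (\<forall>v2. q (f u) v2 \<noteq> 0 \<longrightarrow> v2 \<in> range f)
       \<and> (\<forall>v. q1 u v \<noteq> 0 \<longrightarrow> v \<noteq> u \<longrightarrow> v \<in> UNIV)"
    if u: "u \<in> UNIV" "u = (1,0) \<or> u \<notin> A1" for u
  proof -
    obtain nn kk where ue: "u = (nn,kk)" by fastforce
    have nn: "nn \<ge> 1" using u unfolding ue A1_def by auto
    have dn0: "max (min (real (c+kk)) (real c - real (c-1+nn))) 0 = 0"
      using nn c1 by (auto simp: min_def max_def)
    have mn: "min (real c) (real (c-1+nn)) = real c" using nn c1 by auto
    have a: "q (f u) (f v) = q1 u v" for v
    proof -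
      obtain a b where v: "v = (a,b)" by fastforce
      have e1: "((c+b, c-1+a) = (c+kk+1, c-1+nn)) = ((a,b) = (nn,kk+1))" by auto
      have e2: "((c+b, c-1+a) = (c+kk, c-1+nn+1)) = ((a,b) = (nn+1,kk))" by auto
      have e4: "(1 \<le> c-1+nn \<and> (c+b, c-1+a) = (c+kk, c-1+nn-1)) = ((a,b) = (nn-1,kk))"
        using nn c1 by auto
      have "q (f u) (f v) = q (c+kk, c-1+nn) (c+b, c-1+a)" unfolding ue v f_def by simp
      also have "\<dots> = (if (a,b) = (nn,kk+1) then la1 else if (a,b) = (nn+1,kk) then la2
          else if 1 \<le> c+kk \<and> (c+b, c-1+a) = (c+kk-1, c-1+nn) then 0 * mu1
          else if (a,b) = (nn-1,kk) then real c * mu2 else 0)"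
        unfolding Xrate_eq[of c la1 la2 mu1 mu2 "c+kk" "c-1+nn"] e1 e2 e4 dn0 mn ..
      also have "\<dots> = q1 u v"
        unfolding q1_def ue v MM1rate_eq using nn by auto
      finally show ?thesis .
    qed
    have b: "v2 \<in> range f" if "q (f u) v2 \<noteq> 0" for v2
    proof -
      obtain x yv where v: "v2 = (x,yv)" by fastforce
      have qq: "q (c+kk, c-1+nn) (x,yv) \<noteq> 0" using that unfolding ue v f_def by simp
      have "x \<ge> c \<and> yv \<ge> c-1"
      proof (rule ccontr)
        assume an: "\<not> (x \<ge> c \<and> yv \<ge> c-1)"
        then have "(x,yv) \<noteq> (c+kk+1,c-1+nn)" "(x,yv) \<noteq> (c+kk,c-1+nn+1)" "(x,yv) \<noteq> (c+kk,c-1+nn-1)"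
          using nn by auto
        then have "q (c+kk, c-1+nn) (x,yv) = 0"
          unfolding Xrate_eq[of c la1 la2 mu1 mu2 "c+kk" "c-1+nn"] dn0 by auto
        then show False using qq by simp
      qed
      then have "v2 = f (yv-(c-1), x-c)" unfolding v f_def by auto
      then show ?thesis by blast
    qed
    show ?thesis using a b by blast
  qed
  have zP: "(1::nat,0::nat) \<in> UNIV" by simp
  have AAe: "f v \<in> {w. snd w < c} \<longleftrightarrow> v \<in> A1" if "v \<in> UNIV" for v
    using c1 unfolding f_def A1_def by (cases v) auto
  note T = transfer_hit[of f UNIV "(1,0)" A1 q q1 "{w. snd w < c}", OF inj good zP AAe]
    transfer_hit0[of f UNIV "(1,0)" A1 q q1 "{w. snd w < c}", OF inj good zP AAe]
  have fz: "f (1,0) = (c,c)" unfolding f_def using c1 by simp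
  show "hit_LT q \<alpha> {w. snd w < c} (c,c) (c+m,c-1) = busy_w la2 (real c * mu2) la1 m \<alpha>"
    using T(1)[of \<alpha> "(0,m)"] c1 unfolding fz busy_w_def q1_def A1_def f_def by simp
  show "hit_LT q \<alpha> {w. snd w < c} (c,c) w = 0" if "\<not> (fst w \<ge> c \<and> snd w \<ge> c-1)"
    apply (rule T(2)[of w \<alpha>, unfolded fz])
    using that unfolding f_def by auto
qed

abbreviation "bw m \<equiv> busy_w la2 (real c * mu2) la1 m \<alpha>"

lemma busy_sum:
  "hit_LT q \<alpha> AA (c,c) (c-1,l) = infsum (\<lambda>m. bw m * Hn (m+1) (c-1) l) UNIV"
proof -
  define B where "B = {w::nat\<times>nat. snd w < c}"
  define y where "y = (c-1,l)"
  have AB: "AA \<subseteq> B" unfolding B_def level_def using c1 by auto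
  have "hit_LT q \<alpha> AA (c,c) y = infsum (\<lambda>w. hit_LT q \<alpha> B (c,c) w * tval q \<alpha> AA w y) B"
    by (rule split_hit[OF qok aa AB])
  also have "\<dots> = infsum (\<lambda>w. hit_LT q \<alpha> B (c,c) w * tval q \<alpha> AA w y) ((\<lambda>m. (c+m,c-1)) ` UNIV)"
  proof (rule infsum_cong_neutral)
    fix w assume w: "w \<in> B - range (\<lambda>m. (c+m,c-1))"
    obtain x yv where we: "w = (x,yv)" by fastforce
    have "\<not> (x \<ge> c \<and> yv \<ge> c-1)"
    proof
      assume h: "x \<ge> c \<and> yv \<ge> c-1"
      then have "yv = c-1" using w unfolding we B_def by auto
      then have "w = (c + (x-c), c-1)" using h we by auto
      then show False using w by blast
    qed
    then show "hit_LT q \<alpha> B (c,c) w * tval q \<alpha> AA w y = 0"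
      using busy_transfer(2)[of w] unfolding we B_def by simp
  qed (use c1 in \<open>auto simp: B_def\<close>)
  also have "\<dots> = infsum (\<lambda>m. hit_LT q \<alpha> B (c,c) (c+m,c-1) * tval q \<alpha> AA (c+m,c-1) y) UNIV"
    by (subst infsum_reindex) (auto simp: inj_on_def o_def)
  also have "\<dots> = infsum (\<lambda>m. bw m * Hn (m+1) (c-1) l) UNIV"
    apply (rule infsum_cong)
    subgoal for m using busy_transfer(1)[of m] c1
      unfolding B_def tval_def Hn_def y_def level_def by auto
    done
  finally show ?thesis unfolding y_def .
qed

end


context
  fixes c :: nat and la1 la2 mu1 mu2 :: real and \<alpha> :: complex
  assumes c1: "c \<ge> 1" and l1: "la1 > 0" and l2: "la2 > 0" and m1: "mu1 > 0" and m2: "mu2 > 0"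
    and aa: "Re \<alpha> > 0"
begin

abbreviation "qq \<equiv> Xrate c la1 la2 mu1 mu2"

definition Rk :: "nat \<Rightarrow> real" where
  "Rk k = la1 + la2 + (real c - real k) * mu1 + real k * mu2"

definition Nk :: "nat \<Rightarrow> (nat \<times> nat) set" where
  "Nk k = {(c+1,k),(c,k+1),(c-1,k),(c,k-1)} - {(c,k)}"

lemma Nk_supp: "qq (c,k) w \<noteq> 0 \<Longrightarrow> w \<noteq> (c,k) \<Longrightarrow> w \<in> Nk k"
  unfolding Nk_def by (auto simp: Xrate_eq split: if_splits)

lemma sum_Nk:
  assumes k: "k < c"
  shows "(\<Sum>w\<in>Nk k. g w) = g (c+1,k) + g (c,k+1) + g (c-1,k) + (if k \<ge> 1 then g (c,k-1) else 0)"
proof (cases "k = 0")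
  case True
  have "Nk k = {(c+1,0),(c,1),(c-1,0)}" unfolding Nk_def True using c1 by auto
  then show ?thesis using True c1 by (simp add: add.assoc)
next
  case False
  have "Nk k = {(c+1,k),(c,k+1),(c-1,k),(c,k-1)}" unfolding Nk_def using False c1 by auto
  then show ?thesis using False c1 by (simp add: add.assoc)
qed

lemma q_vals:
  assumes k: "k < c"
  shows "qq (c,k) (c+1,k) = la1" "qq (c,k) (c,k+1) = la2"
    "qq (c,k) (c-1,k) = (real c - real k) * mu1"
    "k \<ge> 1 \<Longrightarrow> qq (c,k) (c,k-1) = real k * mu2"
proof -
  show "qq (c,k) (c+1,k) = la1" "qq (c,k) (c,k+1) = la2" by (simp_all add: Xrate_eq)
  have "max (min (real c) (real c - real k)) 0 = real c - real k" using k by (auto simp: min_def max_def)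
  moreover have "c - 1 \<noteq> c + 1" "c - 1 \<noteq> c" using c1 by auto
  ultimately show "qq (c,k) (c-1,k) = (real c - real k) * mu1" using c1 by (simp add: Xrate_eq)
  show "qq (c,k) (c,k-1) = real k * mu2" if "k \<ge> 1"
  proof -
    have "k - 1 \<noteq> k" "k - 1 \<noteq> k + 1" using that by auto
    then show ?thesis using that k c1 by (simp add: Xrate_eq min_def)
  qed
qed

lemma out_ck:
  assumes k: "k < c"
  shows "out_rate qq (c,k) = Rk k"
proof -
  have "out_rate qq (c,k) = sum (qq (c,k)) ({(c+1,k),(c,k+1),(c-1,k),(c,k-1)} - {(c,k)})"
    by (rule out_rate_sum) (auto simp: Xrate_eq split: if_splits)
  also have "\<dots> = Rk k"
    unfolding Nk_def[symmetric] sum_Nk[OF k] q_vals[OF k] Rk_def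
    using q_vals(4)[OF k] by auto
  finally show ?thesis .
qed

lemma row_eq:
  assumes k: "k < c" and l: "l < c"
  shows "(complex_of_real (Rk k) + \<alpha>) * Gf c la1 la2 mu1 mu2 \<alpha> k l =
     la1 * Hn c la1 la2 mu1 mu2 \<alpha> 2 k l + la2 * tval qq \<alpha> (level c (c-1)) (c,k+1) (c-1,l)
     + (if k = l then complex_of_real ((real c - real k) * mu1) else 0)
     + (if k \<ge> 1 then complex_of_real (real k * mu2) * Gf c la1 la2 mu1 mu2 \<alpha> (k-1) l else 0)"
proof -
  let ?A = "level c (c-1)"
  let ?y = "(c-1,l)"
  let ?D = "complex_of_real (Rk k) + \<alpha>"
  have D0: "?D \<noteq> 0"
  proof
    assume "?D = 0"
    then have "Re ?D = 0" by simp
    moreover have "Rk k \<ge> 0" unfolding Rk_def using l1 l2 m1 m2 k by (auto intro!: add_nonneg_nonneg)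
    ultimately show False using aa by simp
  qed
  have qok: "rateok qq" using rateok_X l1 l2 m1 m2 by simp
  have "Gf c la1 la2 mu1 mu2 \<alpha> k l = infsum (\<lambda>w. fac qq \<alpha> (c,k) w * tval qq \<alpha> ?A w ?y) UNIV"
    unfolding Gf_def[OF c1 l1 l2 m1 m2 aa] by (rule first_step[OF qok aa])
  also have "\<dots> = (\<Sum>w\<in>Nk k. fac qq \<alpha> (c,k) w * tval qq \<alpha> ?A w ?y)"
    apply (subst infsum_finite[symmetric])
     apply (simp add: Nk_def)
    apply (rule infsum_cong_neutral)
    using Nk_supp unfolding fac_def by auto
  also have "\<dots> = (\<Sum>w\<in>Nk k. complex_of_real (qq (c,k) w) * tval qq \<alpha> ?A w ?y) / ?D"
    unfolding sum_divide_distrib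
    apply (rule sum.cong, simp)
    unfolding fac_def out_ck[OF k] Nk_def by auto
  finally have e: "?D * Gf c la1 la2 mu1 mu2 \<alpha> k l = (\<Sum>w\<in>Nk k. complex_of_real (qq (c,k) w) * tval qq \<alpha> ?A w ?y)"
    using D0 by simp
  have t1: "tval qq \<alpha> ?A (c+1,k) ?y = Hn c la1 la2 mu1 mu2 \<alpha> 2 k l"
    unfolding tval_def Hn_def[OF c1 l1 l2 m1 m2 aa] level_def using c1 by auto
  have t3: "tval qq \<alpha> ?A (c-1,k) ?y = (if k = l then 1 else 0)"
    unfolding tval_def level_def using k by auto
  have t4: "k \<ge> 1 \<Longrightarrow> tval qq \<alpha> ?A (c,k-1) ?y = Gf c la1 la2 mu1 mu2 \<alpha> (k-1) l"
    unfolding tval_def Gf_def[OF c1 l1 l2 m1 m2 aa] level_def using c1 by auto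
  show ?thesis
    unfolding e sum_Nk[OF k] q_vals[OF k] t1 t3
    using t4 q_vals(4)[OF k] by auto
qed

end


lemma mult_entry:
  assumes "A \<in> carrier_mat n n" "B \<in> carrier_mat n n" "i < n" "j < n"
  shows "(A * B) $$ (i,j) = (\<Sum>k<n. A $$ (i,k) * B $$ (k,j))"
  using assms by (simp add: scalar_prod_def atLeast0LessThan)

lemma pow_Suc_left:
  assumes A: "A \<in> carrier_mat n n"
  shows "A ^\<^sub>m Suc k = A * A ^\<^sub>m k"
proof (induction k)
  case 0
  then show ?case using A by simp
next
  case (Suc k)
  have "A ^\<^sub>m Suc (Suc k) = (A * A ^\<^sub>m k) * A" using Suc by simp
  also have "\<dots> = A * (A ^\<^sub>m k * A)" using A by (simp add: assoc_mult_mat[of _ n n _ n _ n])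
  finally show ?case by simp
qed

lemma diag_dom_det:
  fixes M :: "complex mat"
  assumes M: "M \<in> carrier_mat n n"
    and dom: "\<And>i. i < n \<Longrightarrow> (\<Sum>j\<in>{..<n} - {i}. cmod (M $$ (i,j))) < cmod (M $$ (i,i))"
  shows "det M \<noteq> 0"
proof
  assume "det M = 0"
  then obtain v where v: "v \<in> carrier_vec n" "v \<noteq> 0\<^sub>v n" "M *\<^sub>v v = 0\<^sub>v n"
    using det_0_iff_vec_prod_zero[OF M] by auto
  obtain j0 where j0: "j0 < n" "v $ j0 \<noteq> 0"
    using v(1,2) by (metis eq_vecI carrier_vecD index_zero_vec(1,2))
  define m where "m = Max ((\<lambda>j. cmod (v $ j)) ` {..<n})"
  have "m \<in> (\<lambda>j. cmod (v $ j)) ` {..<n}" unfolding m_def using j0 by (intro Max_in) auto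
  then obtain i where i: "i < n" "cmod (v $ i) = m" by auto
  have le: "cmod (v $ j) \<le> cmod (v $ i)" if "j < n" for j
    unfolding i(2) m_def using that by (intro Max_ge) auto
  have vi: "cmod (v $ i) > 0" using le[OF j0(1)] j0(2) by (smt (verit) zero_less_norm_iff)
  have "(M *\<^sub>v v) $ i = 0" using v(3) i by simp
  then have "(\<Sum>j<n. M $$ (i,j) * v $ j) = 0" using M v(1) i by (simp add: scalar_prod_def atLeast0LessThan)
  then have "M $$ (i,i) * v $ i + (\<Sum>j\<in>{..<n} - {i}. M $$ (i,j) * v $ j) = 0"
    using i by (simp add: sum.remove)
  then have "M $$ (i,i) * v $ i = - (\<Sum>j\<in>{..<n} - {i}. M $$ (i,j) * v $ j)"
    by (simp add: eq_neg_iff_add_eq_0)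
  then have "cmod (M $$ (i,i)) * cmod (v $ i) = cmod (\<Sum>j\<in>{..<n} - {i}. M $$ (i,j) * v $ j)"
    by (metis norm_minus_cancel norm_mult)
  also have "\<dots> \<le> (\<Sum>j\<in>{..<n} - {i}. cmod (M $$ (i,j)) * cmod (v $ j))"
    by (rule order_trans[OF norm_sum]) (simp add: norm_mult)
  also have "\<dots> \<le> (\<Sum>j\<in>{..<n} - {i}. cmod (M $$ (i,j)) * cmod (v $ i))"
    by (rule sum_mono) (auto intro!: mult_left_mono le)
  also have "\<dots> = (\<Sum>j\<in>{..<n} - {i}. cmod (M $$ (i,j))) * cmod (v $ i)"
    by (simp add: sum_distrib_right)
  also have "\<dots> < cmod (M $$ (i,i)) * cmod (v $ i)"
    using dom[OF i(1)] vi by simp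
  finally show False by simp
qed

lemma inverse_from_det:
  fixes M :: "complex mat"
  assumes M: "M \<in> carrier_mat n n" and d: "det M \<noteq> 0"
  shows "\<exists>Minv \<in> carrier_mat n n. inverts_mat M Minv \<and> inverts_mat Minv M"
proof -
  define Minv where "Minv = (1 / det M) \<cdot>\<^sub>m adj_mat M"
  have adj: "adj_mat M \<in> carrier_mat n n" "M * adj_mat M = det M \<cdot>\<^sub>m 1\<^sub>m n" "adj_mat M * M = det M \<cdot>\<^sub>m 1\<^sub>m n"
    using adj_mat[OF M] by auto
  have C: "Minv \<in> carrier_mat n n" unfolding Minv_def using adj by simp
  have one: "(1 / det M) \<cdot>\<^sub>m (det M \<cdot>\<^sub>m 1\<^sub>m n) = 1\<^sub>m n"
    by (rule eq_matI) (use d in auto)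
  have "M * Minv = 1\<^sub>m n"
    unfolding Minv_def mult_smult_distrib[OF M adj(1)] adj(2) one ..
  moreover have "Minv * M = 1\<^sub>m n"
    unfolding Minv_def mult_smult_assoc_mat[OF adj(1) M] adj(3) one ..
  ultimately show ?thesis using C M unfolding inverts_mat_def by auto
qed


context
  fixes c :: nat and la1 la2 mu1 mu2 :: real and \<alpha> :: complex
  assumes c1: "c \<ge> 1" and l1: "la1 > 0" and l2: "la2 > 0" and m1: "mu1 > 0" and m2: "mu2 > 0"
    and aa: "Re \<alpha> > 0"
begin

abbreviation "GG \<equiv> Gmat c la1 la2 mu1 mu2 \<alpha>"
abbreviation "gf \<equiv> Gf c la1 la2 mu1 mu2 \<alpha>"
abbreviation "hn \<equiv> Hn c la1 la2 mu1 mu2 \<alpha>"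
abbreviation "rk \<equiv> Rk c la1 la2 mu1 mu2"
abbreviation "bb m \<equiv> busy_w la2 (real c * mu2) la1 m \<alpha>"
abbreviation "WW m \<equiv> Wmat c la1 la2 mu2 m \<alpha>"

lemmas ctx = c1 l1 l2 m1 m2 aa

lemma GG_carrier: "GG \<in> carrier_mat c c"
  unfolding Gmat_def by simp

lemma GG_idx: "k < c \<Longrightarrow> l < c \<Longrightarrow> GG $$ (k,l) = gf k l"
  unfolding Gmat_def Gf_def[OF ctx] by simp

lemma GG_pow: "k < c \<Longrightarrow> l < c \<Longrightarrow> (GG ^\<^sub>m Suc m) $$ (k,l) = hn (Suc m) k l"
proof (induction m arbitrary: k l)
  case 0
  then show ?case using GG_carrier GG_idx Hn1[OF ctx] by simp
next
  case (Suc m)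
  have "(GG ^\<^sub>m Suc (Suc m)) $$ (k,l) = (GG * GG ^\<^sub>m Suc m) $$ (k,l)"
    by (subst pow_Suc_left[OF GG_carrier]) (rule refl)
  also have "\<dots> = (\<Sum>j<c. GG $$ (k,j) * (GG ^\<^sub>m Suc m) $$ (j,l))"
    by (rule mult_entry) (use GG_carrier Suc.prems in auto)
  also have "\<dots> = (\<Sum>j<c. gf k j * hn (Suc m) j l)"
    by (rule sum.cong) (use GG_idx Suc in auto)
  also have "\<dots> = hn (Suc (Suc m)) k l" using Hn_Suc[OF ctx, of "Suc m"] by simp
  finally show ?case .
qed

lemma GG_sq: "k < c \<Longrightarrow> l < c \<Longrightarrow> (GG * GG) $$ (k,l) = hn 2 k l"
  using GG_pow[of k l 1] GG_carrier by (simp add: numeral_2_eq_2)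

lemma qokX: "rateok (Xrate c la1 la2 mu1 mu2)" using rateok_X l1 l2 m1 m2 by simp
lemma qokM: "rateok (MM1rate la2 (real c * mu2) la1)" using rateok_MM1 l1 l2 m2 by simp

lemma hn_le: "cmod (hn n k l) \<le> 1"
  unfolding Hn_def[OF ctx] by (rule hit_le1[OF qokX aa])

lemma bb_sum_le: "(\<Sum>m\<in>M. cmod (bb m)) \<le> 1" if "finite M"
proof -
  have "(\<Sum>m\<in>M. cmod (bb m)) = (\<Sum>y\<in>(\<lambda>m. (0::nat,m)) ` M. cmod (hit_LT (MM1rate la2 (real c * mu2) la1) \<alpha> {z. fst z = 0} (1,0) y))"
    by (subst sum.reindex) (auto simp: inj_on_def busy_w_def)
  also have "\<dots> \<le> 1" by (rule sum_hit_le[OF qokM aa]) (use that in simp)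
  finally show ?thesis .
qed

lemma bb_le: "cmod (bb m) \<le> 1" using bb_sum_le[of "{m}"] by simp

lemma bb_summable: "summable (\<lambda>m. cmod (bb m))"
  by (rule bounded_imp_summable[of _ 1]) (auto intro: bb_sum_le)

definition tt :: "nat \<Rightarrow> nat \<Rightarrow> complex" where
  "tt l m = bb m * hn (m+1) (c-1) l"

lemma tt_norm_summable: "summable (\<lambda>m. norm (tt l m))"
  apply (rule summable_comparison_test[OF _ bb_summable])
  using hn_le by (auto simp: tt_def norm_mult intro!: exI[of _ 0] mult_left_le)

lemma tt_summable: "summable (tt l)"
  using tt_norm_summable summable_norm_cancel by blast

lemma busy_suminf: "hit_LT (Xrate c la1 la2 mu1 mu2) \<alpha> (level c (c-1)) (c,c) (c-1,l) = suminf (tt l)"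
proof -
  have s: "tt l summable_on UNIV" by (rule norm_summable_imp_summable_on[OF tt_norm_summable])
  have "tt l sums infsum (tt l) UNIV" by (rule has_sum_imp_sums) (use s in simp)
  then have "infsum (tt l) UNIV = suminf (tt l)" by (rule sums_unique)
  then show ?thesis using busy_sum[OF ctx, of l] unfolding tt_def by simp
qed

lemma WW_carrier: "WW m \<in> carrier_mat c c" unfolding Wmat_def by simp

lemma WW_mult:
  assumes X: "X \<in> carrier_mat c c" and k: "k < c" and n: "n < c"
  shows "(WW m * X) $$ (k,n) = (if k = c-1 then la2 * bb m * X $$ (c-1,n) else 0)"
proof -
  have "(WW m * X) $$ (k,n) = (\<Sum>j<c. WW m $$ (k,j) * X $$ (j,n))"
    by (rule mult_entry[OF WW_carrier X k n])
  also have "\<dots> = (\<Sum>j<c. if j = c-1 then (if k = c-1 then la2 * bb m * X $$ (c-1,n) else 0) else 0)"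
    by (rule sum.cong) (use k in \<open>auto simp: Wmat_def\<close>)
  also have "\<dots> = (if k = c-1 then la2 * bb m * X $$ (c-1,n) else 0)"
    using c1 by (subst sum.delta) auto
  finally show ?thesis .
qed

lemma S_term:
  assumes k: "k < c" and n: "n < c"
  shows "(WW (Suc l) * GG ^\<^sub>m (Suc (Suc l))) $$ (k,n) = (if k = c-1 then la2 * tt n (Suc l) else 0)"
  unfolding WW_mult[OF pow_carrier_mat[OF GG_carrier] k n]
  using GG_pow[of "c-1" n "Suc l"] c1 n by (simp add: tt_def)

lemma S_summable: "k < c \<Longrightarrow> n < c \<Longrightarrow> summable (\<lambda>l. (WW (Suc l) * GG ^\<^sub>m (Suc (Suc l))) $$ (k,n))"
  unfolding S_term
  using summable_mult[OF summable_ignore_initial_segment[OF tt_summable, of n 1], of "complex_of_real la2"]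
  by (cases "k = c-1") auto

end


context
  fixes c :: nat and la1 la2 mu1 mu2 :: real and \<alpha> :: complex
  assumes c1: "c \<ge> 1" and l1: "la1 > 0" and l2: "la2 > 0" and m1: "mu1 > 0" and m2: "mu2 > 0"
    and aa: "Re \<alpha> > 0"
begin

lemmas ctx' = c1 l1 l2 m1 m2 aa

abbreviation "G2 \<equiv> Gmat c la1 la2 mu1 mu2 \<alpha>"
abbreviation "g2 \<equiv> Gf c la1 la2 mu1 mu2 \<alpha>"
abbreviation "h2 \<equiv> Hn c la1 la2 mu1 mu2 \<alpha>"
abbreviation "r2 \<equiv> Rk c la1 la2 mu1 mu2"
abbreviation "b2 m \<equiv> busy_w la2 (real c * mu2) la1 m \<alpha>"
abbreviation "W2 m \<equiv> Wmat c la1 la2 mu2 m \<alpha>"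
abbreviation "t2 \<equiv> tt c la1 la2 mu1 mu2 \<alpha>"

definition MM :: "complex mat" where
  "MM = \<alpha> \<cdot>\<^sub>m 1\<^sub>m c - A0mat c la1 la2 mu1 mu2 - W2 0"

lemma MM_carrier: "MM \<in> carrier_mat c c"
  unfolding MM_def A0mat_def Wmat_def by (auto intro!: minus_carrier_mat)

lemma MM_idx:
  assumes k: "k < c" and j: "j < c"
  shows "MM $$ (k,j) = (if j = k then \<alpha> + complex_of_real (r2 k) - (if k = c-1 then la2 * b2 0 else 0) else 0)
     + (if j = k+1 then - complex_of_real la2 else 0)
     + (if j = k-1 then (if k \<ge> 1 then - complex_of_real (real k * mu2) else 0) else 0)"
  unfolding MM_def using k j
  by (auto simp: A0mat_def Wmat_def Rk_def[OF ctx'] algebra_simps)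

lemma MG_idx:
  assumes k: "k < c" and l: "l < c"
  shows "(MM * G2) $$ (k,l) = (\<alpha> + complex_of_real (r2 k) - (if k = c-1 then la2 * b2 0 else 0)) * g2 k l
     + (if k+1 < c then - complex_of_real la2 * g2 (k+1) l else 0)
     + (if k \<ge> 1 then - complex_of_real (real k * mu2) * g2 (k-1) l else 0)"
proof -
  have "(MM * G2) $$ (k,l) = (\<Sum>j<c. MM $$ (k,j) * G2 $$ (j,l))"
    by (rule mult_entry[OF MM_carrier GG_carrier[OF ctx'] k l])
  also have "\<dots> = (\<Sum>j<c. (if j = k then (\<alpha> + complex_of_real (r2 k) - (if k = c-1 then la2 * b2 0 else 0)) * g2 j l else 0)
     + (if j = k+1 then - complex_of_real la2 * g2 j l else 0)
     + (if j = k-1 then (if k \<ge> 1 then - complex_of_real (real k * mu2) * g2 j l else 0) else 0))"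
    apply (rule sum.cong, simp)
    subgoal for j using k l by (simp add: MM_idx GG_idx[OF ctx'] distrib_right)
    done
  also have "\<dots> = (\<alpha> + complex_of_real (r2 k) - (if k = c-1 then la2 * b2 0 else 0)) * g2 k l
     + (if k+1 < c then - complex_of_real la2 * g2 (k+1) l else 0)
     + (if k \<ge> 1 then - complex_of_real (real k * mu2) * g2 (k-1) l else 0)"
    unfolding sum.distrib using k by (simp add: sum.delta less_imp_diff_less)
  finally show ?thesis .
qed

definition SSm :: "complex mat" where
  "SSm = mat c c (\<lambda>(k, n). \<Sum>l. (W2 (Suc l) * G2 ^\<^sub>m (Suc (Suc l))) $$ (k, n))"

lemma SS_idx:
  assumes k: "k < c" and n: "n < c"
  shows "SSm $$ (k,n) = (if k = c-1 then la2 * (\<Sum>l. t2 n (Suc l)) else 0)"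
proof -
  have "SSm $$ (k,n) = (\<Sum>l. (W2 (Suc l) * G2 ^\<^sub>m (Suc (Suc l))) $$ (k, n))"
    unfolding SSm_def using k n by (simp del: pow_mat.simps)
  also have "\<dots> = (\<Sum>l. (if k = c-1 then la2 * t2 n (Suc l) else 0))"
    unfolding S_term[OF ctx' k n] ..
  also have "\<dots> = (if k = c-1 then la2 * (\<Sum>l. t2 n (Suc l)) else 0)"
    using suminf_mult[OF summable_ignore_initial_segment[OF tt_summable[OF ctx', of n], of 1], of "complex_of_real la2"]
    by simp
  finally show ?thesis .
qed

lemma A1GG_idx:
  assumes k: "k < c" and n: "n < c"
  shows "(A1mat c la1 * G2 * G2) $$ (k,n) = la1 * h2 2 k n"
proof -
  have "A1mat c la1 * G2 = complex_of_real la1 \<cdot>\<^sub>m G2"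
    unfolding A1mat_def mult_smult_assoc_mat[OF one_carrier_mat GG_carrier[OF ctx']] using GG_carrier[OF ctx'] by simp
  then have "A1mat c la1 * G2 * G2 = complex_of_real la1 \<cdot>\<^sub>m (G2 * G2)"
    using mult_smult_assoc_mat[OF GG_carrier[OF ctx'] GG_carrier[OF ctx']] by simp
  then show ?thesis using k n GG_sq[OF ctx' k n] GG_carrier[OF ctx'] by simp
qed

lemma main_eq: "MM * G2 = Am1mat c mu1 + A1mat c la1 * G2 * G2 + SSm"
proof (rule eq_matI)
  fix k l assume "k < dim_row (Am1mat c mu1 + A1mat c la1 * G2 * G2 + SSm)" "l < dim_col (Am1mat c mu1 + A1mat c la1 * G2 * G2 + SSm)"
  then have k: "k < c" and l: "l < c" by (auto simp: Am1mat_def SSm_def)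
  have R: "(Am1mat c mu1 + A1mat c la1 * G2 * G2 + SSm) $$ (k,l) =
      (if k = l then complex_of_real ((real c - real k) * mu1) else 0) + la1 * h2 2 k l
      + (if k = c-1 then la2 * (\<Sum>l'. t2 l (Suc l')) else 0)"
  proof -
    have d: "Am1mat c mu1 \<in> carrier_mat c c" "A1mat c la1 * G2 * G2 \<in> carrier_mat c c" "SSm \<in> carrier_mat c c"
      unfolding Am1mat_def SSm_def A1mat_def using GG_carrier[OF ctx'] by auto
    have add_idx: "(X + Y) $$ (k,l) = X $$ (k,l) + Y $$ (k,l)" if "X \<in> carrier_mat c c" "Y \<in> carrier_mat c c" for X Y :: "complex mat"
      using that k l by simp
    have "(Am1mat c mu1 + A1mat c la1 * G2 * G2 + SSm) $$ (k,l) = Am1mat c mu1 $$ (k,l) + (A1mat c la1 * G2 * G2) $$ (k,l) + SSm $$ (k,l)"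
      using d by (simp only: add_idx add_carrier_mat)
    also have "Am1mat c mu1 $$ (k,l) = (if k = l then complex_of_real ((real c - real k) * mu1) else 0)"
      unfolding Am1mat_def using k l by simp
    finally show ?thesis unfolding A1GG_idx[OF k l] SS_idx[OF k l] .
  qed
  have row: "(complex_of_real (r2 k) + \<alpha>) * g2 k l =
     la1 * h2 2 k l + la2 * tval (Xrate c la1 la2 mu1 mu2) \<alpha> (level c (c-1)) (c,k+1) (c-1,l)
     + (if k = l then complex_of_real ((real c - real k) * mu1) else 0)
     + (if k \<ge> 1 then complex_of_real (real k * mu2) * g2 (k-1) l else 0)"
    by (rule row_eq[OF ctx' k l])
  show "(MM * G2) $$ (k,l) = (Am1mat c mu1 + A1mat c la1 * G2 * G2 + SSm) $$ (k,l)"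
  proof (cases "k+1 < c")
    case True
    have tv: "tval (Xrate c la1 la2 mu1 mu2) \<alpha> (level c (c-1)) (c,k+1) (c-1,l) = g2 (k+1) l"
      unfolding tval_def Gf_def[OF ctx'] level_def using c1 by auto
    have "k \<noteq> c-1" using True by auto
    then show ?thesis unfolding R MG_idx[OF k l] using True row unfolding tv
      by (simp add: algebra_simps)
  next
    case False
    then have kc: "k = c-1" using k by auto
    have tv: "tval (Xrate c la1 la2 mu1 mu2) \<alpha> (level c (c-1)) (c,k+1) (c-1,l) = suminf (t2 l)"
      unfolding tval_def busy_suminf[OF ctx', symmetric] level_def using c1 kc by auto
    have sp: "suminf (t2 l) = b2 0 * g2 (c-1) l + (\<Sum>l'. t2 l (Suc l'))"
      using suminf_split_head[OF tt_summable[OF ctx', of l]] Hn1[OF ctx', of "c-1" l]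
      unfolding tt_def[OF ctx'] by simp
    have row': "(complex_of_real (r2 k) + \<alpha>) * g2 k l =
     la1 * h2 2 k l + la2 * (b2 0 * g2 (c-1) l + (\<Sum>l'. t2 l (Suc l')))
     + (if k = l then complex_of_real ((real c - real k) * mu1) else 0)
     + (if k \<ge> 1 then complex_of_real (real k * mu2) * g2 (k-1) l else 0)"
      using row unfolding tv sp .
    show ?thesis unfolding R MG_idx[OF k l] using False row' kc
      by (simp add: algebra_simps)
  qed
qed (auto simp: Am1mat_def SSm_def MM_def Wmat_def Gmat_def)

end


context
  fixes c :: nat and la1 la2 mu1 mu2 :: real and \<alpha> :: complex
  assumes c1: "c \<ge> 1" and l1: "la1 > 0" and l2: "la2 > 0" and m1: "mu1 > 0" and m2: "mu2 > 0"
    and aa: "Re \<alpha> > 0"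
begin

lemmas ctx3 = c1 l1 l2 m1 m2 aa

lemma MM_det: "det (MM c la1 la2 mu1 mu2 \<alpha>) \<noteq> 0"
proof (rule diag_dom_det[OF MM_carrier[OF ctx3]])
  fix i assume i: "i < c"
  let ?M = "MM c la1 la2 mu1 mu2 \<alpha>"
  let ?b = "busy_w la2 (real c * mu2) la1 0 \<alpha>"
  have off: "cmod (?M $$ (i,j)) \<le> (if j = i+1 then la2 else 0) + (if j = i-1 then (if i \<ge> 1 then real i * mu2 else 0) else 0)"
    if j: "j \<in> {..<c} - {i}" for j
  proof -
    have "?M $$ (i,j) = (if j = i+1 then - complex_of_real la2 else 0)
     + (if j = i-1 then (if i \<ge> 1 then - complex_of_real (real i * mu2) else 0) else 0)"
      using MM_idx[OF ctx3 i, of j] j by auto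
    then show ?thesis using l2 m2
      by (auto simp: norm_minus_cancel norm_mult intro!: order_trans[OF norm_triangle_ineq])
  qed
  have "(\<Sum>j\<in>{..<c} - {i}. cmod (?M $$ (i,j))) \<le>
     (\<Sum>j\<in>{..<c} - {i}. (if j = i+1 then la2 else 0) + (if j = i-1 then (if i \<ge> 1 then real i * mu2 else 0) else 0))"
    by (rule sum_mono) (rule off)
  also have "\<dots> = (if i+1 \<in> {..<c} - {i} then la2 else 0) + (if i-1 \<in> {..<c} - {i} then (if i \<ge> 1 then real i * mu2 else 0) else 0)"
    unfolding sum.distrib by (simp add: sum.delta)
  also have "\<dots> \<le> (if i+1 < c then la2 else 0) + real i * mu2"
    using l2 m2 by auto
  finally have o: "(\<Sum>j\<in>{..<c} - {i}. cmod (?M $$ (i,j))) \<le> (if i+1 < c then la2 else 0) + real i * mu2" .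
  have d: "?M $$ (i,i) = \<alpha> + complex_of_real (Rk c la1 la2 mu1 mu2 i) - (if i = c-1 then la2 * ?b else 0)"
    using MM_idx[OF ctx3 i i] by (cases "i = 0") auto
  have bre: "Re ?b \<le> 1" using bb_le[OF ctx3, of 0] complex_Re_le_cmod order_trans by blast
  have "Re (?M $$ (i,i)) \<ge> Re \<alpha> + Rk c la1 la2 mu1 mu2 i - (if i = c-1 then la2 else 0)"
    unfolding d using bre l2 by (auto simp: mult_left_le)
  moreover have "Re (?M $$ (i,i)) \<le> cmod (?M $$ (i,i))" by (rule complex_Re_le_cmod)
  moreover have "Rk c la1 la2 mu1 mu2 i \<ge> la1 + la2 + mu1 + real i * mu2"
  proof -
    have "real c - real i \<ge> 1" using i by linarith
    then have "(real c - real i) * mu1 \<ge> mu1" using m1 by (simp add: mult_le_cancel_right1)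
    then show ?thesis unfolding Rk_def[OF ctx3] by simp
  qed
  ultimately have "cmod (?M $$ (i,i)) > (if i+1 < c then la2 else 0) + real i * mu2"
    using aa l1 l2 m1 i by (auto split: if_splits)
  then show "(\<Sum>j\<in>{..<c} - {i}. cmod (?M $$ (i,j))) < cmod (?M $$ (i,i))" using o by linarith
qed

end

theorem proposition2:
  fixes c :: nat and la1 la2 mu1 mu2 :: real and \<alpha> :: complex
  assumes "c \<ge> 1" and "la1 > 0" and "la2 > 0" and "mu1 > 0" and "mu2 > 0"
    and "Re \<alpha> > 0"
  shows "let G = Gmat c la1 la2 mu1 mu2 \<alpha>;
             W = (\<lambda>m. Wmat c la1 la2 mu2 m \<alpha>);
             M = \<alpha> \<cdot>\<^sub>m 1\<^sub>m c - A0mat c la1 la2 mu1 mu2 - W 0;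
             S = mat c c (\<lambda>(k, n). \<Sum>l. (W (Suc l) * G ^\<^sub>m (Suc (Suc l))) $$ (k, n))
         in (\<forall>k<c. \<forall>n<c. summable (\<lambda>l. (W (Suc l) * G ^\<^sub>m (Suc (Suc l))) $$ (k, n)))
          \<and> (\<exists>Minv \<in> carrier_mat c c. inverts_mat M Minv \<and> inverts_mat Minv M
               \<and> G = Minv * (Am1mat c mu1 + A1mat c la1 * G * G + S))"
proof -
  note ctx = assms
  let ?G = "Gmat c la1 la2 mu1 mu2 \<alpha>"
  let ?M = "MM c la1 la2 mu1 mu2 \<alpha>"
  have Me: "\<alpha> \<cdot>\<^sub>m 1\<^sub>m c - A0mat c la1 la2 mu1 mu2 - Wmat c la1 la2 mu2 0 \<alpha> = ?M"
    unfolding MM_def[OF ctx] ..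
  have Se: "mat c c (\<lambda>(k, n). \<Sum>l. (Wmat c la1 la2 mu2 (Suc l) \<alpha> * ?G ^\<^sub>m (Suc (Suc l))) $$ (k, n))
     = SSm c la1 la2 mu1 mu2 \<alpha>"
    unfolding SSm_def[OF ctx] ..
  obtain Minv where Mi: "Minv \<in> carrier_mat c c" "inverts_mat ?M Minv" "inverts_mat Minv ?M"
    using inverse_from_det[OF MM_carrier[OF ctx] MM_det[OF ctx]] by blast
  have GC: "?G \<in> carrier_mat c c" by (rule GG_carrier[OF ctx])
  have MC: "?M \<in> carrier_mat c c" by (rule MM_carrier[OF ctx])
  have "Minv * ?M = 1\<^sub>m c" using Mi unfolding inverts_mat_def by auto
  then have "Minv * (?M * ?G) = ?G"
    using assoc_mult_mat[OF Mi(1) MC GC] GC by simp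
  then have eq: "?G = Minv * (Am1mat c mu1 + A1mat c la1 * ?G * ?G + SSm c la1 la2 mu1 mu2 \<alpha>)"
    unfolding main_eq[OF ctx] by simp
  show ?thesis
    unfolding Let_def Me Se
    using S_summable[OF ctx] Mi eq by blast
qed


end
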